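(* Let $T$ be a string of length $n$ over an alphabet $\Sigma$, and let $1\le i\le j<n$. Let $d=j-i+1$ and let $\sigma'$ be the number of distinct characters occurring in $T[i..j]$. Then $|\mathsf{MAW}(T[i..j+1])\setminus\mathsf{MAW}(T[i..j])|\le\sigma'+d$.
   Context: For a string $S$ over alphabet $\Sigma$, a string $w\in\Sigma^*$ is a minimal absent word (MAW) of $S$ if $w$ does not occur in $S$ but every proper substring of $w$ (including the empty string) occurs in $S$; $\mathsf{MAW}(S)$ is the set of all MAWs of $S$. $T[a..b]$ denotes the substring of $T$ from position $a$ to $b$. *)

theory Defs
  imports Main "HOL-Library.Sublist"
begin

text \<open>1-indexed substring T[a..b] (inclusive).\<close>
definition substr :: "'a list \<Rightarrow> nat \<Rightarrow> nat \<Rightarrow> 'a list" where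
  "substr T a b = take (Suc b - a) (drop (a - 1) T)"

definition MAW :: "'a set \<Rightarrow> 'a list \<Rightarrow> 'a list set" where
  "MAW Alph S = {w. set w \<subseteq> Alph \<and> \<not> sublist w S \<and>
      (\<forall>u. sublist u w \<and> u \<noteq> w \<longrightarrow> sublist u S)}"

end

theory Submission
  imports Defs
begin

lemma proper_sublist:
  assumes "sublist u w" "u \<noteq> w"
  shows "sublist u (butlast w) \<or> sublist u (tl w)"
proof -
  obtain p q where w: "w = p @ u @ q" using assms(1) by (auto simp: sublist_def)
  show ?thesis
  proof (cases "q = []")
    case True
    then have "p \<noteq> []" using assms w by auto
    then obtain z p' where "p = z # p'" by (cases p) auto
    then have "tl w = p' @ u @ q" using w by simp
    then show ?thesis by auto
  next
    case False
    then have "butlast w = p @ u @ butlast q" using w by (simp add: butlast_append)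
    then show ?thesis by auto
  qed
qed

lemma sub_trans: "sublist a b \<Longrightarrow> sublist b c \<Longrightarrow> sublist a c"
  using sublist_order.order_trans by blast

lemma basic:
  assumes "w \<in> MAW A (S @ [c])" "w \<notin> MAW A S"
  shows "\<exists>a x b. w = a # x @ [b] \<and> sublist (a # x) (S @ [c]) \<and> sublist (x @ [b]) (S @ [c])
     \<and> \<not> sublist w (S @ [c]) \<and> (\<not> sublist (a # x) S \<or> \<not> sublist (x @ [b]) S)"
proof -
  have sA: "set w \<subseteq> A" and nS': "\<not> sublist w (S @ [c])"
    and pr: "\<And>u. sublist u w \<Longrightarrow> u \<noteq> w \<Longrightarrow> sublist u (S @ [c])"
    using assms(1) by (auto simp: MAW_def)
  have nS: "\<not> sublist w S" using nS' sub_trans by (metis sublist_append_rightI)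
  then obtain u where u: "sublist u w" "u \<noteq> w" "\<not> sublist u S"
    using assms(2) sA by (auto simp: MAW_def)
  have "w \<noteq> []" using nS by auto
  then obtain a w' where w: "w = a # w'" by (cases w) auto
  have "w' \<noteq> []"
  proof
    assume "w' = []"
    then have "u = []" using proper_sublist[OF u(1,2)] w by auto
    then show False using u by auto
  qed
  then obtain x b where w': "w' = x @ [b]" by (cases w' rule: rev_exhaust) auto
  have bl: "butlast w = a # x" and tl: "tl w = x @ [b]" using w w' by (auto simp: butlast_append)
  have "sublist (a # x) (S @ [c])" using pr[of "a # x"] w w' by auto
  moreover have "sublist (x @ [b]) (S @ [c])" using pr[of "x @ [b]"] w w' by (metis list.inject not_Cons_self2 sublist_Cons_right sublist_order.order_refl)
  moreover have "\<not> sublist (a # x) S \<or> \<not> sublist (x @ [b]) S"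
    using proper_sublist[OF u(1,2)] u(3) bl tl sub_trans by metis
  ultimately show ?thesis using w w' nS' by blast
qed

lemma caseA:
  assumes "\<not> sublist (x1 @ [b1]) S" "\<not> sublist (x2 @ [b2]) S"
    "sublist (x1 @ [b1]) (S @ [c])" "sublist (x2 @ [b2]) (S @ [c])"
    "\<not> sublist (a1 # x1 @ [b1]) (S @ [c])" "\<not> sublist (a2 # x2 @ [b2]) (S @ [c])"
    "suffix (a1 # x1) P" "suffix (a2 # x2) P"
  shows "a1 # x1 @ [b1] = a2 # x2 @ [b2]"
proof -
  have s1: "b1 = c" "suffix x1 S" using assms(1,3) by (auto simp: sublist_snoc)
  have s2: "b2 = c" "suffix x2 S" using assms(2,4) by (auto simp: sublist_snoc)
  have no: False if "suffix (a # x) (a' # x')" "a # x \<noteq> a' # x'" "suffix x' S"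
      "\<not> sublist (a # x @ [c]) (S @ [c])" for a x a' x'
  proof -
    have "suffix (a # x) x'" using that(1,2) by (auto simp: suffix_Cons)
    then have "suffix (a # x) S" using that(3) by (meson suffix_order.order_trans)
    then have "suffix ((a # x) @ [c]) (S @ [c])" by simp
    then show False using that(4) by (metis append_Cons suffix_imp_sublist)
  qed
  from suffix_same_cases[OF assms(7,8)] show ?thesis
    using no[of a1 x1 a2 x2] no[of a2 x2 a1 x1] s1 s2 assms(5,6) by auto
qed

lemma caseB:
  assumes "sublist (x1 @ [b]) S" "sublist (x2 @ [b]) S"
    "\<not> sublist (a1 # x1) S" "\<not> sublist (a2 # x2) S"
    "sublist (a1 # x1) (S @ [c])" "sublist (a2 # x2) (S @ [c])"
  shows "a1 # x1 @ [b] = a2 # x2 @ [b]"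
proof -
  have s1: "suffix (a1 # x1) (S @ [c])" using assms(3,5) by (auto simp: sublist_snoc)
  have s2: "suffix (a2 # x2) (S @ [c])" using assms(4,6) by (auto simp: sublist_snoc)
  have no: False if "suffix (a # x) (a' # x')" "a # x \<noteq> a' # x'" "sublist (x' @ [b]) S"
      "\<not> sublist (a # x) S" for a x a' x'
  proof -
    have "suffix (a # x) x'" using that(1,2) by (auto simp: suffix_Cons)
    then have "sublist (a # x) (x' @ [b])" by (meson sub_trans suffix_imp_sublist sublist_append_rightI)
    then show False using that(3,4) sub_trans by blast
  qed
  from suffix_same_cases[OF s1 s2] show ?thesis
    using no[of a1 x1 a2 x2] no[of a2 x2 a1 x1] assms by auto
qed

lemma key:
  fixes S :: "'a list"
  assumes ne: "S \<noteq> []"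
  shows "card (MAW A (S @ [c]) - MAW A S) \<le> card (set S) + length S"
proof -
  define D where "D = MAW A (S @ [c]) - MAW A S"
  define r where "r w = length (SOME ss. \<exists>ps. S @ [c] = ps @ butlast w @ ss)" for w :: "'a list"
  define f where "f w = (if sublist (tl w) S then Inl (last w) else Inr (r w))" for w :: "'a list"
  define B where "B = Inl ` set S \<union> Inr ` ({0..length S} - {1})"
  have dec: "\<exists>a x b. w = a # x @ [b] \<and> sublist (a # x) (S @ [c]) \<and> sublist (x @ [b]) (S @ [c])
     \<and> \<not> sublist w (S @ [c]) \<and> (\<not> sublist (a # x) S \<or> \<not> sublist (x @ [b]) S)" if "w \<in> D" for w
    using basic[of w A S c] that unfolding D_def by simp
  have rocc: "\<exists>ps ss. S @ [c] = ps @ butlast w @ ss \<and> length ss = r w" 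
    if "sublist (butlast w) (S @ [c])" for w
  proof -
    have "\<exists>ss ps. S @ [c] = ps @ butlast w @ ss" using that by (auto simp: sublist_def)
    from someI_ex[OF this] show ?thesis unfolding r_def by blast
  qed
  have inj: "inj_on f D"
  proof (rule inj_onI)
    fix w1 w2 assume w1D: "w1 \<in> D" and w2D: "w2 \<in> D" and fe: "f w1 = f w2"
    obtain a1 x1 b1 where d1: "w1 = a1 # x1 @ [b1]" "sublist (a1 # x1) (S @ [c])" "sublist (x1 @ [b1]) (S @ [c])"
     "\<not> sublist w1 (S @ [c])" "\<not> sublist (a1 # x1) S \<or> \<not> sublist (x1 @ [b1]) S"
      using dec[OF w1D] by blast
    obtain a2 x2 b2 where d2: "w2 = a2 # x2 @ [b2]" "sublist (a2 # x2) (S @ [c])" "sublist (x2 @ [b2]) (S @ [c])"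
     "\<not> sublist w2 (S @ [c])" "\<not> sublist (a2 # x2) S \<or> \<not> sublist (x2 @ [b2]) S"
      using dec[OF w2D] by blast
    have t1: "tl w1 = x1 @ [b1]" "butlast w1 = a1 # x1" "last w1 = b1" using d1 by (auto simp: butlast_append)
    have t2: "tl w2 = x2 @ [b2]" "butlast w2 = a2 # x2" "last w2 = b2" using d2 by (auto simp: butlast_append)
    show "w1 = w2"
    proof (cases "sublist (x1 @ [b1]) S")
      case True
      then have "sublist (x2 @ [b2]) S" and "b1 = b2" using fe t1 t2 unfolding f_def by (auto split: if_splits)
      then show ?thesis using caseB[of x1 b1 S x2 a1 a2 c] True d1 d2 by auto
    next
      case False
      then have F2: "\<not> sublist (x2 @ [b2]) S" and rr: "r w1 = r w2"
        using fe t1 t2 unfolding f_def by (auto split: if_splits)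
      obtain ps1 ss1 where o1: "S @ [c] = ps1 @ (a1 # x1) @ ss1" "length ss1 = r w1"
        using rocc[of w1] t1 d1 by auto
      obtain ps2 ss2 where o2: "S @ [c] = ps2 @ (a2 # x2) @ ss2" "length ss2 = r w2"
        using rocc[of w2] t2 d2 by auto
      have "(ps1 @ (a1 # x1)) @ ss1 = (ps2 @ (a2 # x2)) @ ss2" using o1 o2 by simp
      moreover have "length ss1 = length ss2" using o1 o2 rr by simp
      ultimately have "ps1 @ (a1 # x1) = ps2 @ (a2 # x2)" using append_eq_append_conv by blast
      then have "suffix (a1 # x1) (ps1 @ (a1 # x1))" "suffix (a2 # x2) (ps1 @ (a1 # x1))"
        by (metis suffix_appendI suffix_order.order_refl)+
      then show ?thesis using caseA[of x1 b1 S x2 b2 c a1 a2] False F2 d1 d2 by auto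
    qed
  qed
  have img: "f ` D \<subseteq> B"
  proof
    fix y assume "y \<in> f ` D"
    then obtain w where wD: "w \<in> D" and y: "y = f w" by auto
    obtain a x b where d: "w = a # x @ [b]" "sublist (a # x) (S @ [c])" "sublist (x @ [b]) (S @ [c])"
     "\<not> sublist w (S @ [c])" "\<not> sublist (a # x) S \<or> \<not> sublist (x @ [b]) S"
      using dec[OF wD] by blast
    have t: "tl w = x @ [b]" "butlast w = a # x" "last w = b" using d by (auto simp: butlast_append)
    show "y \<in> B"
    proof (cases "sublist (x @ [b]) S")
      case True
      then have "b \<in> set S" by (auto simp: sublist_def)
      then show ?thesis using y t True unfolding f_def B_def by auto
    next
      case False
      then have bc: "b = c" using d(3) by (auto simp: sublist_snoc)
      obtain ps ss where o: "S @ [c] = ps @ (a # x) @ ss" "length ss = r w"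
        using rocc[of w] t d by auto
      have "length ss \<le> length S" using arg_cong[OF o(1), of length] by simp
      moreover have "length ss \<noteq> 1"
      proof
        assume "length ss = 1"
        then obtain e where "ss = [e]" by (cases ss) auto
        then have "S @ [c] = (ps @ (a # x)) @ [e]" using o by simp
        then have "S = ps @ a # x" "e = c" by auto
        then have "sublist w (S @ [c])" using d(1) bc by auto
        then show False using d(4) by simp
      qed
      ultimately show ?thesis using y t False o(2) unfolding f_def B_def by auto
    qed
  qed
  have "card D \<le> card B"
    by (rule card_inj_on_le[OF inj img]) (simp add: B_def)
  also have "\<dots> \<le> card (Inl ` set S :: ('a + nat) set) + card (Inr ` ({0..length S} - {1}) :: ('a + nat) set)"
    unfolding B_def by (rule card_Un_le)
  also have "\<dots> = card (set S) + length S"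
  proof -
    have "1 \<in> {0..length S}" using ne by (cases S) auto
    then have "card ({0..length S} - {1}) = length S" by (simp add: card_Diff_singleton)
    then show ?thesis by (simp add: card_image)
  qed
  finally show ?thesis unfolding D_def .
qed

theorem lemma11:
  fixes Alph :: "'a set" and T :: "'a list" and i j :: nat
  assumes "set T \<subseteq> Alph"
    and "1 \<le> i" and "i \<le> j" and "j < length T"
  shows "card (MAW Alph (substr T i (j + 1)) - MAW Alph (substr T i j))
           \<le> card (set (substr T i j)) + (j - i + 1)"
proof -
  have e: "substr T i (j + 1) = substr T i j @ [T ! j]"
    using assms unfolding substr_def
    by (simp add: take_Suc_conv_app_nth Suc_diff_le)
  have l: "length (substr T i j) = j - i + 1"
    using assms unfolding substr_def by simp
  have "substr T i j \<noteq> []" using l by auto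
  then show ?thesis using key[of "substr T i j" Alph "T ! j"] e l by simp
qed

end
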